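(* Let $A$ be a real $m\times m$ matrix, $f$ in the range of $A$, $y$ the minimal-norm solution of $Ay=f$. Fix $q\in(0,1)$, $\alpha_0>0$, $C>1$, $\varepsilon\in(0,1)$. For each $\delta\in(0,1)$ let $f_\delta\in\mathbb{R}^m$ satisfy $\|f_\delta-f\|\le\delta$ and $(1-q)\alpha_0q\|Q_{\alpha_0q}^{-1}f_\delta\|>C\delta^\varepsilon$, and let $n_\delta$ be the smallest integer $n\ge1$ with $G_n\le C\delta^\varepsilon$. Then $$\lim_{\delta\to0}\frac{\delta}{\sqrt{\alpha_0q^{n_\delta}}}=0.$$
   Context: $A^*$ is the transpose of $A$, $Q:=AA^*$, $Q_a:=Q+aI$ for $a>0$; $\|\cdot\|$ is the Euclidean norm. $G_0=0$ and $G_n=qG_{n-1}+(1-q)\alpha_0q^n\|Q_{\alpha_0q^n}^{-1}f_\delta\|$ for $n\ge1$. *)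

theory Defs
  imports "HOL-Analysis.Analysis"
begin

definition Qreg :: "real^'m^'m \<Rightarrow> real \<Rightarrow> real^'m^'m" where
  "Qreg A a = A ** transpose A + a *\<^sub>R mat 1"

fun Gseq :: "real^'m^'m \<Rightarrow> real \<Rightarrow> real \<Rightarrow> real^'m \<Rightarrow> nat \<Rightarrow> real" where
  "Gseq A q \<alpha>0 g 0 = 0"
| "Gseq A q \<alpha>0 g (Suc n) = q * Gseq A q \<alpha>0 g n
     + (1 - q) * \<alpha>0 * q ^ Suc n * norm (matrix_inv (Qreg A (\<alpha>0 * q ^ Suc n)) *v g)"

definition min_norm_solution :: "real^'m^'m \<Rightarrow> real^'m \<Rightarrow> real^'m \<Rightarrow> bool" where
  "min_norm_solution A f y \<longleftrightarrow> A *v y = f \<and> (\<forall>z. A *v z = f \<longrightarrow> norm y \<le> norm z)"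

end

theory Submission imports Defs begin

lemma Qreg_inner:
  fixes A :: "real^'m^'m"
  shows "inner (Qreg A a *v v) v = a * inner v v + inner (transpose A *v v) (transpose A *v v)"
proof -
  have "Qreg A a *v v = A *v (transpose A *v v) + a *\<^sub>R v"
    unfolding Qreg_def
    by (simp add: matrix_vector_mult_add_rdistrib matrix_vector_mul_assoc[symmetric] scaleR_matrix_vector_assoc[symmetric] del: transpose_matrix_vector)
  moreover have "inner (A *v w) v = inner w (transpose A *v v)" for w
    by (metis dot_lmul_matrix inner_commute transpose_matrix_vector)
  ultimately show ?thesis by (simp add: inner_add_left add.commute)
qed

lemma Qreg_inv:
  fixes A :: "real^'m^'m"
  assumes "a > 0"
  shows "Qreg A a *v (matrix_inv (Qreg A a) *v g) = g"
proof -
  have "\<forall>x. Qreg A a *v x = 0 \<longrightarrow> x = 0"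
  proof (intro allI impI)
    fix x assume "Qreg A a *v x = 0"
    then have "a * inner x x + inner (transpose A *v x) (transpose A *v x) = 0"
      using Qreg_inner[of A a x] by simp
    moreover have "inner (transpose A *v x) (transpose A *v x) \<ge> 0" by simp
    moreover have "inner x x \<ge> 0" by simp
    ultimately have "inner x x = 0" using assms
      by (smt (verit) mult_pos_pos mult_nonneg_nonneg)
    then show "x = 0" by simp
  qed
  then have "invertible (Qreg A a)"
    using matrix_left_invertible_ker invertible_left_inverse by blast
  then have "Qreg A a ** matrix_inv (Qreg A a) = mat 1"
    unfolding invertible_def matrix_inv_def by (rule someI_ex[THEN conjunct1])
  then show ?thesis by (simp add: matrix_vector_mul_assoc)
qed

lemma Qreg_bound1:
  fixes A :: "real^'m^'m"
  assumes "a > 0"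
  shows "a * norm (matrix_inv (Qreg A a) *v e) \<le> norm e"
proof -
  define v where "v = matrix_inv (Qreg A a) *v e"
  have "inner (Qreg A a *v v) v = inner e v" using Qreg_inv[OF assms, of A e] v_def by simp
  then have "a * inner v v + inner (transpose A *v v) (transpose A *v v) = inner e v"
    by (simp add: Qreg_inner)
  moreover have "inner (transpose A *v v) (transpose A *v v) \<ge> 0" by (rule inner_ge_zero)
  moreover have "inner e v \<le> norm e * norm v" by (rule Cauchy_Schwarz_ineq2[THEN order_trans[OF abs_ge_self]])
  ultimately have "a * inner v v \<le> norm e * norm v"
    by linarith
  then have "a * (norm v * norm v) \<le> norm e * norm v"
    by (simp add: dot_square_norm power2_eq_square)
  then have "a * norm v \<le> norm e" 
    by (cases "norm v = 0") (use assms in auto)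
  then show ?thesis by (simp add: v_def)
qed

lemma Qreg_bound2:
  fixes A :: "real^'m^'m"
  assumes "a > 0"
  shows "a * norm (matrix_inv (Qreg A a) *v (A *v y)) \<le> sqrt a * norm y / 2"
proof -
  define v where "v = matrix_inv (Qreg A a) *v (A *v y)"
  define t where "t = transpose A *v v"
  have "inner (Qreg A a *v v) v = inner (A *v y) v" using Qreg_inv[OF assms, of A "A *v y"] v_def by simp
  also have "\<dots> = inner y t" unfolding t_def
    by (metis dot_lmul_matrix inner_commute transpose_matrix_vector)
  finally have "a * inner v v + inner t t = inner y t"
    by (simp add: Qreg_inner t_def)
  moreover have "inner y t \<le> norm y * norm t" by (rule Cauchy_Schwarz_ineq2[THEN order_trans[OF abs_ge_self]])
  ultimately have h: "a * (norm v)^2 + (norm t)^2 \<le> norm y * norm t"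
    by (simp add: dot_square_norm)
  have "norm y * norm t - (norm t)^2 \<le> (norm y)^2 / 4"
    using zero_le_power2[of "norm t - norm y / 2"] by (simp add: power2_eq_square algebra_simps)
  then have "a * (norm v)^2 \<le> (norm y)^2/4" using h by linarith
  then have "(a * norm v)^2 \<le> (sqrt a * norm y / 2)^2"
  proof -
    have "(a * norm v)^2 = a * (a * (norm v)^2)" by (simp add: power2_eq_square)
    also have "\<dots> \<le> a * ((norm y)^2/4)" using \<open>a * (norm v)^2 \<le> (norm y)^2/4\<close> assms by simp
    also have "\<dots> = (sqrt a * norm y / 2)^2" using assms by (simp add: power_mult_distrib power_divide)
    finally show ?thesis .
  qed
  then have "a * norm v \<le> sqrt a * norm y / 2"
    by (rule power2_le_imp_le) (use assms in simp)
  then show ?thesis by (simp add: v_def)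
qed

lemma h_bound:
  fixes A :: "real^'m^'m"
  assumes "a > 0" "norm (g - A *v y) \<le> d"
  shows "a * norm (matrix_inv (Qreg A a) *v g) \<le> d + sqrt a * norm y / 2"
proof -
  let ?M = "matrix_inv (Qreg A a)"
  have "?M *v g = ?M *v (A *v y) + ?M *v (g - A *v y)"
    by (simp add: matrix_vector_mult_diff_distrib)
  then have "norm (?M *v g) \<le> norm (?M *v (A *v y)) + norm (?M *v (g - A *v y))"
    by (metis norm_triangle_ineq)
  then have "a * norm (?M *v g) \<le> a * norm (?M *v (A *v y)) + a * norm (?M *v (g - A *v y))"
    using assms(1) by (simp add: distrib_left[symmetric])
  also have "\<dots> \<le> sqrt a * norm y / 2 + norm (g - A *v y)"
    using Qreg_bound1[OF assms(1), of A "g - A *v y"] Qreg_bound2[OF assms(1), of A y] by linarith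
  finally show ?thesis using assms(2) by linarith
qed

lemma G_bound:
  fixes A :: "real^'m^'m"
  assumes "0 < q" "q < 1" "0 < \<alpha>0" "norm (g - A *v y) \<le> d"
  shows "Gseq A q \<alpha>0 g n \<le> d + norm y * sqrt \<alpha>0 * sqrt q ^ n"
proof (induction n)
  case 0
  have "0 \<le> d" using assms(4) norm_ge_zero order_trans by blast
  then show ?case using assms(3) by simp
next
  case (Suc n)
  define r where "r = sqrt q"
  define P where "P = norm y * sqrt \<alpha>0 * r ^ Suc n"
  have r: "r > 0" "r < 1" "r * r = q" using assms unfolding r_def by auto
  have P0: "P \<ge> 0" unfolding P_def using r assms(3) by simp
  have a0: "\<alpha>0 * q ^ Suc n > 0" using assms by simp
  have sq: "sqrt (\<alpha>0 * q ^ Suc n) = sqrt \<alpha>0 * r ^ Suc n"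
    unfolding r_def by (simp add: real_sqrt_mult real_sqrt_power)
  have h: "(\<alpha>0 * q ^ Suc n) * norm (matrix_inv (Qreg A (\<alpha>0 * q ^ Suc n)) *v g) \<le> d + P / 2"
    using h_bound[OF a0 assms(4)] unfolding sq P_def by (simp add: mult_ac)
  have IH: "Gseq A q \<alpha>0 g n \<le> d + norm y * sqrt \<alpha>0 * r ^ n" using Suc r_def by simp
  have qP: "q * (norm y * sqrt \<alpha>0 * r ^ n) = r * P"
    unfolding P_def using r(3)[symmetric] by (simp add: mult_ac)
  have "Gseq A q \<alpha>0 g (Suc n) = q * Gseq A q \<alpha>0 g n
     + (1 - q) * ((\<alpha>0 * q ^ Suc n) * norm (matrix_inv (Qreg A (\<alpha>0 * q ^ Suc n)) *v g))"
    by (simp add: mult_ac)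
  also have "\<dots> \<le> q * (d + norm y * sqrt \<alpha>0 * r ^ n) + (1 - q) * (d + P / 2)"
    by (rule add_mono; rule mult_left_mono) (use IH h assms in auto)
  also have "\<dots> = d + (r + (1 - r*r)/2) * P" using qP r(3) by (simp add: algebra_simps)
  also have "\<dots> \<le> d + P"
  proof -
    have "r*2 \<le> 1 + r*r" using zero_le_power2[of "1 - r"] by (simp add: power2_eq_square algebra_simps)
    then have "r + (1 - r*r)/2 \<le> 1" by (simp add: field_simps)
    then show ?thesis using P0 mult_right_mono[of _ 1 P] by fastforce
  qed
  finally show ?case unfolding P_def r_def .
qed

theorem lemma2p9:
  fixes A :: "real^'m^'m" and f y :: "real^'m"
    and q \<alpha>0 C \<epsilon> :: real and fd :: "real \<Rightarrow> real^'m"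
  assumes "f \<in> range (\<lambda>x. A *v x)"
    and "min_norm_solution A f y"
    and "0 < q" "q < 1" "0 < \<alpha>0" "1 < C" "0 < \<epsilon>" "\<epsilon> < 1"
    and "\<And>\<delta>. 0 < \<delta> \<Longrightarrow> \<delta> < 1 \<Longrightarrow> norm (fd \<delta> - f) \<le> \<delta>"
    and "\<And>\<delta>. 0 < \<delta> \<Longrightarrow> \<delta> < 1 \<Longrightarrow>
           (1 - q) * \<alpha>0 * q * norm (matrix_inv (Qreg A (\<alpha>0 * q)) *v fd \<delta>) > C * \<delta> powr \<epsilon>"
  shows "((\<lambda>\<delta>. \<delta> / sqrt (\<alpha>0 * q ^ (LEAST n. 1 \<le> n \<and> Gseq A q \<alpha>0 (fd \<delta>) n \<le> C * \<delta> powr \<epsilon>)))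
           \<longlongrightarrow> 0) (at_right 0)"
proof -
  have Ay: "A *v y = f" using assms(2) unfolding min_norm_solution_def by blast
  define r where "r = sqrt q"
  define s where "s = sqrt \<alpha>0"
  define Y where "Y = norm y"
  define K where "K = Y / (r * (C - 1))"
  have r: "r > 0" "r < 1" using assms(3,4) unfolding r_def by auto
  have s: "s > 0" using assms(5) unfolding s_def by auto
  have Y0: "Y \<ge> 0" unfolding Y_def by simp
  let ?F = "\<lambda>\<delta>. \<delta> / sqrt (\<alpha>0 * q ^ (LEAST n. 1 \<le> n \<and> Gseq A q \<alpha>0 (fd \<delta>) n \<le> C * \<delta> powr \<epsilon>))"
  have key: "0 \<le> ?F \<delta> \<and> ?F \<delta> \<le> K * \<delta> powr (1 - \<epsilon>)" if d: "0 < \<delta>" "\<delta> < 1" for \<delta>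
  proof -
    define g where "g = fd \<delta>"
    define P where "P = (\<lambda>n. 1 \<le> n \<and> Gseq A q \<alpha>0 g n \<le> C * \<delta> powr \<epsilon>)"
    define N where "N = (LEAST n. P n)"
    have gf: "norm (g - A *v y) \<le> \<delta>" using assms(9)[OF d] Ay g_def by simp
    have Gb: "Gseq A q \<alpha>0 g n \<le> \<delta> + Y * s * r ^ n" for n
      using G_bound[OF assms(3,4,5) gf, of n] unfolding Y_def s_def r_def .
    have dle: "\<delta> \<le> \<delta> powr \<epsilon>"
      using powr_mono'[of \<epsilon> 1 \<delta>] assms(8) d by simp
    have dpos: "\<delta> powr \<epsilon> > 0" using d by simp
    have gap: "C * \<delta> powr \<epsilon> - \<delta> \<ge> (C - 1) * \<delta> powr \<epsilon>" using dle by (simp add: algebra_simps)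
    have gap0: "(C - 1) * \<delta> powr \<epsilon> > 0" using assms(6) dpos by simp
    obtain n where n: "r ^ n < (C * \<delta> powr \<epsilon> - \<delta>) / (Y * s + 1)"
      using real_arch_pow_inv[of "(C * \<delta> powr \<epsilon> - \<delta>) / (Y * s + 1)" r] r gap gap0 Y0 s
      by (smt (verit) divide_pos_pos mult_nonneg_nonneg)
    have "Y * s * r ^ Suc n \<le> (Y * s + 1) * r ^ n"
    proof -
      have "Y * s * r \<le> Y * s" using mult_left_mono[of r "1::real" "Y * s"] r Y0 s by simp
      then have "Y * s * r \<le> Y * s + 1" by simp
      then have "(Y * s * r) * r ^ n \<le> (Y * s + 1) * r ^ n" by (rule mult_right_mono) (use r in simp)
      then show ?thesis by (simp add: mult_ac)
    qed
    also have "\<dots> < C * \<delta> powr \<epsilon> - \<delta>" using n Y0 s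
      by (smt (verit) mult_nonneg_nonneg pos_less_divide_eq mult.commute)
    finally have "P (Suc n)" unfolding P_def using Gb[of "Suc n"] by simp
    then have PN: "P N" unfolding N_def by (rule LeastI)
    have "N \<noteq> 1"
    proof
      assume "N = 1"
      then have "Gseq A q \<alpha>0 g (Suc 0) \<le> C * \<delta> powr \<epsilon>" using PN unfolding P_def by simp
      then show False using assms(10)[OF d] unfolding g_def by (simp add: mult_ac)
    qed
    then have N2: "N \<ge> 2" using PN unfolding P_def by simp
    have "\<not> P (N - 1)" unfolding N_def by (rule not_less_Least) (use N2 N_def in simp)
    then have "Gseq A q \<alpha>0 g (N - 1) > C * \<delta> powr \<epsilon>" unfolding P_def using N2 by fastforce
    then have big: "Y * s * r ^ (N - 1) > (C - 1) * \<delta> powr \<epsilon>" using Gb[of "N - 1"] gap by linarith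
    then have Ypos: "Y > 0" using gap0 Y0 by (cases "Y = 0") auto
    have sqN: "sqrt (\<alpha>0 * q ^ N) = r * (s * r ^ (N - 1))"
    proof -
      have "N = Suc (N - 1)" using N2 by simp
      then have "r ^ N = r * r ^ (N - 1)" by (metis power_Suc)
      then show ?thesis unfolding r_def s_def by (simp add: real_sqrt_mult real_sqrt_power mult_ac)
    qed
    have T: "s * r ^ (N - 1) > (C - 1) * \<delta> powr \<epsilon> / Y"
      using big Ypos by (simp add: pos_divide_less_eq mult_ac)
    have Tpos: "(C - 1) * \<delta> powr \<epsilon> / Y > 0" using gap0 Ypos by simp
    have "?F \<delta> = \<delta> / sqrt (\<alpha>0 * q ^ N)" unfolding N_def P_def g_def by simp
    also have "\<dots> = \<delta> / (r * (s * r ^ (N - 1)))" by (simp only: sqN)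
    also have "\<dots> \<le> \<delta> / (r * ((C - 1) * \<delta> powr \<epsilon> / Y))"
    proof -
      have D: "r * ((C - 1) * \<delta> powr \<epsilon> / Y) \<le> r * (s * r ^ (N - 1))"
        using T r by (intro mult_left_mono) auto
      have Dp: "0 < r * ((C - 1) * \<delta> powr \<epsilon> / Y)" by (rule mult_pos_pos[OF r(1) Tpos])
      have Dq: "0 < r * (s * r ^ (N - 1))" using less_le_trans[OF Dp D] .
      have "0 < r * (s * r ^ (N - 1)) * (r * ((C - 1) * \<delta> powr \<epsilon> / Y))"
        by (rule mult_pos_pos[OF Dq Dp])
      then show ?thesis by (intro divide_left_mono[OF D]) (use d in auto)
    qed
    also have "\<dots> = K * (\<delta> / \<delta> powr \<epsilon>)" unfolding K_def using Ypos r dpos assms(6) by (simp add: field_simps)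
    also have "\<delta> / \<delta> powr \<epsilon> = \<delta> powr (1 - \<epsilon>)" using d by (simp add: powr_diff)
    finally have up: "?F \<delta> \<le> K * \<delta> powr (1 - \<epsilon>)" .
    have "0 \<le> ?F \<delta>" using d assms(3,5) by (intro divide_nonneg_nonneg) auto
    with up show ?thesis by blast
  qed
  have ev: "eventually (\<lambda>\<delta>. 0 < \<delta> \<and> \<delta> < 1) (at_right (0::real))"
    using eventually_at_right_real[of 0 1] by simp
  have lim: "((\<lambda>\<delta>. K * \<delta> powr (1 - \<epsilon>)) \<longlongrightarrow> 0) (at_right 0)"
  proof -
    have "((\<lambda>\<delta>::real. \<delta>) \<longlongrightarrow> 0) (at_right 0)" by (rule tendsto_ident_at)
    then have "((\<lambda>\<delta>. \<delta> powr (1 - \<epsilon>)) \<longlongrightarrow> 0) (at_right 0)"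
    proof (rule tendsto_zero_powrI)
      show "\<forall>\<^sub>F x in at_right 0. 0 \<le> (x::real)"
        using eventually_at_right_less[of "0::real"] by (rule eventually_mono) simp
    qed (use assms(8) in auto)
    then show ?thesis using tendsto_mult_right_zero by blast
  qed
  show ?thesis
    by (rule tendsto_sandwich[OF _ _ tendsto_const lim])
       (use ev key in \<open>auto elim!: eventually_mono\<close>)
qed

end
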